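(* Let $n\ge2$ and $1\le k\le n$. Let ${}^1\mathcal M_n^k$ (resp. ${}^n\mathcal M_n^k$) be the set of monotone permutations $\pi\in S_n$ with $\pi(1)=k$ and $\pi(n)=1$ (resp. $\pi(n)=n$). For $\pi\in{}^1\mathcal M_n^k$ define $\tilde\pi\in S_{n-1}$ by $\tilde\pi(i)=\pi(i)-1$, and for $\pi\in{}^n\mathcal M_n^k$ by $\tilde\pi(i)=\pi(i)$, $i=1,\dots,n-1$. Then $\pi\mapsto\tilde\pi$ is a bijection ${}^1\mathcal M_n^k\to\mathcal M_{n-1}^{k-1}$ (resp. ${}^n\mathcal M_n^k\to\mathcal M_{n-1}^{k}$), and $(-1)^{\operatorname{dr}(\tilde\pi)}=(-1)^{\operatorname{dr}(\pi)+n}$ (resp. $(-1)^{\operatorname{dr}(\tilde\pi)}=(-1)^{\operatorname{dr}(\pi)}$).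
   Context: A permutation $\pi\in S_n$ is monotone if, for each $i=1,\dots,n$, either $\pi(j)<\pi(i)$ for all $j<i$, or $\pi(j)>\pi(i)$ for all $j<i$; in the second case $i$ is called a drop of $\pi$ ($i=1$ is not a drop). $\mathcal M_n^k$ denotes the set of monotone permutations with $\pi(1)=k$, and $\operatorname{dr}(\pi)$ the sum of all drops of $\pi$. *)

theory Defs
  imports "HOL-Combinatorics.Permutations"
begin

text \<open>Permutations of S_n are functions nat => nat permuting {1..n} (identity elsewhere).\<close>

definition monotone_perm :: "nat \<Rightarrow> (nat \<Rightarrow> nat) \<Rightarrow> bool" where
  "monotone_perm n \<pi> \<longleftrightarrow>
     (\<forall>i\<in>{1..n}. (\<forall>j\<in>{1..<i}. \<pi> j < \<pi> i) \<or> (\<forall>j\<in>{1..<i}. \<pi> j > \<pi> i))"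

definition is_drop :: "nat \<Rightarrow> (nat \<Rightarrow> nat) \<Rightarrow> nat \<Rightarrow> bool" where
  "is_drop n \<pi> i \<longleftrightarrow> i \<in> {2..n} \<and> (\<forall>j\<in>{1..<i}. \<pi> j > \<pi> i)"

definition dr :: "nat \<Rightarrow> (nat \<Rightarrow> nat) \<Rightarrow> nat" where
  "dr n \<pi> = (\<Sum>i\<in>{i\<in>{1..n}. is_drop n \<pi> i}. i)"

definition Mon :: "nat \<Rightarrow> nat \<Rightarrow> (nat \<Rightarrow> nat) set" where
  "Mon n k = {\<pi>. \<pi> permutes {1..n} \<and> monotone_perm n \<pi> \<and> \<pi> 1 = k}"

definition Mon_end1 :: "nat \<Rightarrow> nat \<Rightarrow> (nat \<Rightarrow> nat) set" where
  "Mon_end1 n k = {\<pi>\<in>Mon n k. \<pi> n = 1}"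

definition Mon_endn :: "nat \<Rightarrow> nat \<Rightarrow> (nat \<Rightarrow> nat) set" where
  "Mon_endn n k = {\<pi>\<in>Mon n k. \<pi> n = n}"

definition tilde1 :: "nat \<Rightarrow> (nat \<Rightarrow> nat) \<Rightarrow> (nat \<Rightarrow> nat)" where
  "tilde1 n \<pi> = (\<lambda>i. if i \<in> {1..n-1} then \<pi> i - 1 else i)"

definition tilden :: "nat \<Rightarrow> (nat \<Rightarrow> nat) \<Rightarrow> (nat \<Rightarrow> nat)" where
  "tilden n \<pi> = (\<lambda>i. if i \<in> {1..n-1} then \<pi> i else i)"

end

theory Submission
  imports Defs
begin

lemma perm_facts:
  assumes "p permutes {1..(N::nat)}"
  shows "\<And>i. i \<in> {1..N} \<Longrightarrow> p i \<in> {1..N}"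
    and "\<And>i j. p i = p j \<Longrightarrow> i = j"
    and "\<And>i. i \<notin> {1..N} \<Longrightarrow> p i = i"
proof -
  show "\<And>i. i \<in> {1..N} \<Longrightarrow> p i \<in> {1..N}" by (simp only: permutes_in_image[OF assms])
  show "\<And>i j. p i = p j \<Longrightarrow> i = j" using permutes_inj[OF assms] by (simp add: inj_eq)
  show "\<And>i. i \<notin> {1..N} \<Longrightarrow> p i = i" using assms by (simp add: permutes_not_in)
qed

lemma mk_perm:
  assumes "\<And>i. i \<in> {1..(N::nat)} \<Longrightarrow> f i \<in> {1..N}"
    and "\<And>i j. i \<in> {1..N} \<Longrightarrow> j \<in> {1..N} \<Longrightarrow> f i = f j \<Longrightarrow> i = j"
    and "\<And>i. i \<notin> {1..N} \<Longrightarrow> f i = i"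
  shows "f permutes {1..N}"
proof -
  have inj: "inj_on f {1..N}" using assms(2) by (auto simp: inj_on_def)
  have "f ` {1..N} = {1..N}"
    by (rule endo_inj_surj) (use assms(1) inj in auto)
  with inj have "bij_betw f {1..N} {1..N}" by (simp add: bij_betw_def)
  thus ?thesis using assms(3) by (intro bij_imp_permutes) auto
qed

lemma part1:
  assumes P: "\<pi> \<in> Mon_end1 (Suc m) k" and m: "m \<ge> 1"
  shows "tilde1 (Suc m) \<pi> \<in> Mon m (k-1)"
    and "dr (Suc m) \<pi> = Suc m + dr m (tilde1 (Suc m) \<pi>)"
proof -
  define \<tau> where "\<tau> = tilde1 (Suc m) \<pi>"
  have t: "\<And>i. \<tau> i = (if i \<in> {1..m} then \<pi> i - 1 else i)"
    by (simp add: \<tau>_def tilde1_def)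
  have p: "\<pi> permutes {1..Suc m}" and mo: "monotone_perm (Suc m) \<pi>" and p1: "\<pi> 1 = k"
    and pn: "\<pi> (Suc m) = 1"
    using P by (auto simp: Mon_end1_def Mon_def)
  note pf = perm_facts[OF p]
  have rng: "\<pi> i \<in> {2..Suc m}" if "i \<in> {1..m}" for i
  proof -
    have "\<pi> i \<in> {1..Suc m}" using pf(1) that by auto
    moreover have "\<pi> i \<noteq> 1" using pf(2)[of i "Suc m"] pn that by auto
    ultimately show ?thesis by auto
  qed
  have tp: "\<tau> permutes {1..m}"
  proof (rule mk_perm)
    show "\<tau> i \<in> {1..m}" if "i \<in> {1..m}" for i using rng[OF that] that t[of i] by auto
    show "i = j" if "i \<in> {1..m}" "j \<in> {1..m}" "\<tau> i = \<tau> j" for i j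
      using rng[OF that(1)] rng[OF that(2)] that t[of i] t[of j] pf(2)[of i j] by auto
    show "\<tau> i = i" if "i \<notin> {1..m}" for i using t[of i] that by auto
  qed
  have cmp: "(\<tau> j < \<tau> i) = (\<pi> j < \<pi> i) \<and> (\<tau> j > \<tau> i) = (\<pi> j > \<pi> i)"
    if "i \<in> {1..m}" "j \<in> {1..m}" for i j
    using rng[OF that(1)] rng[OF that(2)] that t[of i] t[of j] by auto
  have tm: "monotone_perm m \<tau>"
    unfolding monotone_perm_def
  proof
    fix i assume i: "i \<in> {1..m}"
    hence "i \<in> {1..Suc m}" by auto
    with mo have "(\<forall>j\<in>{1..<i}. \<pi> j < \<pi> i) \<or> (\<forall>j\<in>{1..<i}. \<pi> j > \<pi> i)"
      by (auto simp: monotone_perm_def)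
    moreover have "\<And>j. j \<in> {1..<i} \<Longrightarrow> j \<in> {1..m}" using i by auto
    ultimately show "(\<forall>j\<in>{1..<i}. \<tau> j < \<tau> i) \<or> (\<forall>j\<in>{1..<i}. \<tau> j > \<tau> i)"
      using cmp i by metis
  qed
  have t1: "\<tau> 1 = k - 1" using t[of 1] m p1 by auto
  show "tilde1 (Suc m) \<pi> \<in> Mon m (k-1)"
    using tp tm t1 by (simp add: Mon_def \<tau>_def)
  have dr_eq: "is_drop m \<tau> i = is_drop (Suc m) \<pi> i" if "i \<in> {1..m}" for i
  proof -
    have "\<And>j. j \<in> {1..<i} \<Longrightarrow> j \<in> {1..m}" using that by auto
    thus ?thesis using cmp that unfolding is_drop_def by auto
  qed
  have lastd: "is_drop (Suc m) \<pi> (Suc m)"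
    unfolding is_drop_def
  proof (intro conjI ballI)
    show "Suc m \<in> {2..Suc m}" using m by auto
    fix j assume "j \<in> {1..<Suc m}"
    thus "\<pi> (Suc m) < \<pi> j" using rng[of j] pn by auto
  qed
  have S: "{i\<in>{1..Suc m}. is_drop (Suc m) \<pi> i} = insert (Suc m) {i\<in>{1..m}. is_drop m \<tau> i}"
    using dr_eq lastd by (auto simp: le_Suc_eq)
  show "dr (Suc m) \<pi> = Suc m + dr m (tilde1 (Suc m) \<pi>)"
    unfolding dr_def S \<tau>_def[symmetric] by (subst sum.insert) auto
qed

lemma part2:
  assumes P: "\<pi> \<in> Mon_endn (Suc m) k" and m: "m \<ge> 1"
  shows "tilden (Suc m) \<pi> \<in> Mon m k"
    and "dr (Suc m) \<pi> = dr m (tilden (Suc m) \<pi>)"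
proof -
  define \<tau> where "\<tau> = tilden (Suc m) \<pi>"
  have t: "\<And>i. \<tau> i = (if i \<in> {1..m} then \<pi> i else i)"
    by (simp add: \<tau>_def tilden_def)
  have p: "\<pi> permutes {1..Suc m}" and mo: "monotone_perm (Suc m) \<pi>" and p1: "\<pi> 1 = k"
    and pn: "\<pi> (Suc m) = Suc m"
    using P by (auto simp: Mon_endn_def Mon_def)
  note pf = perm_facts[OF p]
  have rng: "\<pi> i \<in> {1..m}" if "i \<in> {1..m}" for i
  proof -
    have "\<pi> i \<in> {1..Suc m}" using pf(1) that by auto
    moreover have "\<pi> i \<noteq> Suc m" using pf(2)[of i "Suc m"] pn that by auto
    ultimately show ?thesis by auto
  qed
  have tp: "\<tau> permutes {1..m}"
  proof (rule mk_perm)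
    show "\<tau> i \<in> {1..m}" if "i \<in> {1..m}" for i using rng[OF that] that t[of i] by auto
    show "i = j" if "i \<in> {1..m}" "j \<in> {1..m}" "\<tau> i = \<tau> j" for i j
      using that t[of i] t[of j] pf(2)[of i j] by auto
    show "\<tau> i = i" if "i \<notin> {1..m}" for i using t[of i] that by auto
  qed
  have cmp: "\<tau> j = \<pi> j" if "j \<in> {1..m}" for j
    using that t[of j] by auto
  have tm: "monotone_perm m \<tau>"
    unfolding monotone_perm_def
  proof
    fix i assume i: "i \<in> {1..m}"
    hence "i \<in> {1..Suc m}" by auto
    with mo have "(\<forall>j\<in>{1..<i}. \<pi> j < \<pi> i) \<or> (\<forall>j\<in>{1..<i}. \<pi> j > \<pi> i)"
      by (auto simp: monotone_perm_def)
    moreover have "\<And>j. j \<in> {1..<i} \<Longrightarrow> j \<in> {1..m}" using i by auto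
    ultimately show "(\<forall>j\<in>{1..<i}. \<tau> j < \<tau> i) \<or> (\<forall>j\<in>{1..<i}. \<tau> j > \<tau> i)"
      using cmp i by metis
  qed
  have t1: "\<tau> 1 = k" using t[of 1] m p1 by auto
  show "tilden (Suc m) \<pi> \<in> Mon m k"
    using tp tm t1 by (simp add: Mon_def \<tau>_def)
  have dr_eq: "is_drop m \<tau> i = is_drop (Suc m) \<pi> i" if "i \<in> {1..m}" for i
  proof -
    have "\<And>j. j \<in> {1..<i} \<Longrightarrow> j \<in> {1..m}" using that by auto
    thus ?thesis using cmp that unfolding is_drop_def by auto
  qed
  have lastd: "\<not> is_drop (Suc m) \<pi> (Suc m)"
  proof
    assume "is_drop (Suc m) \<pi> (Suc m)"
    hence "\<pi> (Suc m) < \<pi> 1" using m unfolding is_drop_def by auto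
    thus False using rng[of 1] pn m by auto
  qed
  have S: "{i\<in>{1..Suc m}. is_drop (Suc m) \<pi> i} = {i\<in>{1..m}. is_drop m \<tau> i}"
    using dr_eq lastd by (auto simp: le_Suc_eq)
  show "dr (Suc m) \<pi> = dr m (tilden (Suc m) \<pi>)"
    unfolding dr_def S \<tau>_def[symmetric] by simp
qed

theorem lemma2p8:
  fixes n k :: nat
  assumes "2 \<le> n" and "1 \<le> k" and "k \<le> n"
  shows "bij_betw (tilde1 n) (Mon_end1 n k) (Mon (n-1) (k-1))
       \<and> (\<forall>\<pi>\<in>Mon_end1 n k. (-1::int) ^ dr (n-1) (tilde1 n \<pi>) = (-1) ^ (dr n \<pi> + n))
       \<and> bij_betw (tilden n) (Mon_endn n k) (Mon (n-1) k)
       \<and> (\<forall>\<pi>\<in>Mon_endn n k. (-1::int) ^ dr (n-1) (tilden n \<pi>) = (-1) ^ dr n \<pi>)"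
proof -
  obtain m where n: "n = Suc m" using assms(1) by (cases n) auto
  have m: "m \<ge> 1" using assms(1) n by simp
  have nm: "n - 1 = m" using n by simp
  have A: "bij_betw (tilde1 n) (Mon_end1 n k) (Mon (n-1) (k-1))"
    unfolding bij_betw_def
  proof (intro conjI)
    show "inj_on (tilde1 n) (Mon_end1 n k)"
    proof (rule inj_onI)
      fix p q assume p: "p \<in> Mon_end1 n k" and q: "q \<in> Mon_end1 n k"
        and e: "tilde1 n p = tilde1 n q"
      have pp: "p permutes {1..Suc m}" "p (Suc m) = 1" using p n by (auto simp: Mon_end1_def Mon_def)
      have qp: "q permutes {1..Suc m}" "q (Suc m) = 1" using q n by (auto simp: Mon_end1_def Mon_def)
      show "p = q"
      proof
        fix i
        show "p i = q i"
        proof (cases "i \<in> {1..m}")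
          case True
          hence "p i - 1 = q i - 1" using fun_cong[OF e, of i] n by (simp add: tilde1_def)
          moreover have "p i \<ge> 1" "q i \<ge> 1" using perm_facts(1)[OF pp(1), of i] perm_facts(1)[OF qp(1), of i] True by auto
          ultimately show ?thesis by simp
        next
          case False
          show ?thesis
          proof (cases "i = Suc m")
            case True thus ?thesis using pp qp by simp
          next
            case F2: False
            hence "i \<notin> {1..Suc m}" using False by auto
            thus ?thesis using perm_facts(3)[OF pp(1)] perm_facts(3)[OF qp(1)] by simp
          qed
        qed
      qed
    qed
    show "tilde1 n ` Mon_end1 n k = Mon (n - 1) (k - 1)"
    proof
      show "tilde1 n ` Mon_end1 n k \<subseteq> Mon (n - 1) (k - 1)"
      proof (rule image_subsetI)
        fix \<pi> assume "\<pi> \<in> Mon_end1 n k"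
        thus "tilde1 n \<pi> \<in> Mon (n - 1) (k - 1)" using part1(1)[of \<pi> m k, OF _ m] n by simp
      qed
      show "Mon (n - 1) (k - 1) \<subseteq> tilde1 n ` Mon_end1 n k"
      proof
        fix \<sigma> assume s: "\<sigma> \<in> Mon (n - 1) (k - 1)"
        have sp: "\<sigma> permutes {1..m}" and smo: "monotone_perm m \<sigma>" and s1: "\<sigma> 1 = k - 1"
          using s nm by (auto simp: Mon_def)
        note sf = perm_facts[OF sp]
        define \<pi> where "\<pi> = (\<lambda>i. if i \<in> {1..m} then \<sigma> i + 1 else if i = Suc m then 1 else i)"
        have pp: "\<pi> permutes {1..Suc m}"
        proof (rule mk_perm)
          show "\<pi> i \<in> {1..Suc m}" if "i \<in> {1..Suc m}" for i
            using sf(1)[of i] that by (auto simp: \<pi>_def)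
          show "i = j" if ij: "i \<in> {1..Suc m}" "j \<in> {1..Suc m}" "\<pi> i = \<pi> j" for i j
          proof -
            have A: "\<pi> x = \<sigma> x + 1" if "x \<in> {1..m}" for x using that by (simp add: \<pi>_def)
            have Bz: "\<sigma> x \<noteq> 0" if "x \<in> {1..m}" for x using sf(1)[OF that] by auto
            have C: "\<pi> (Suc m) = 1" by (simp add: \<pi>_def)
            consider "i \<in> {1..m}" "j \<in> {1..m}" | "i \<in> {1..m}" "j = Suc m"
              | "i = Suc m" "j \<in> {1..m}" | "i = Suc m" "j = Suc m"
              using ij(1,2) by (metis atLeastAtMost_iff le_Suc_eq)
            then show ?thesis
            proof cases
              case 1 then show ?thesis using ij(3) A[of i] A[of j] sf(2)[of i j] by simp
            next
              case 2 then show ?thesis using ij(3) A[of i] C Bz[of i] by simp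
            next
              case 3 then show ?thesis using ij(3) A[of j] C Bz[of j] by simp
            next
              case 4 then show ?thesis by simp
            qed
          qed
          show "\<pi> i = i" if "i \<notin> {1..Suc m}" for i using that by (auto simp: \<pi>_def)
        qed
        have pmo: "monotone_perm (Suc m) \<pi>"
          unfolding monotone_perm_def
        proof
          fix i assume i: "i \<in> {1..Suc m}"
          show "(\<forall>j\<in>{1..<i}. \<pi> j < \<pi> i) \<or> (\<forall>j\<in>{1..<i}. \<pi> j > \<pi> i)"
          proof (cases "i = Suc m")
            case True
            have "\<forall>j\<in>{1..<i}. \<pi> j > \<pi> i"
            proof
              fix j assume j: "j \<in> {1..<i}"
              hence jm: "j \<in> {1..m}" using True by auto
              have "\<sigma> j \<ge> 1" using sf(1)[OF jm] by simp
              thus "\<pi> j > \<pi> i" using True jm by (simp add: \<pi>_def)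
            qed
            thus ?thesis by blast
          next
            case False
            hence im: "i \<in> {1..m}" using i by auto
            hence "(\<forall>j\<in>{1..<i}. \<sigma> j < \<sigma> i) \<or> (\<forall>j\<in>{1..<i}. \<sigma> j > \<sigma> i)"
              using smo by (auto simp: monotone_perm_def)
            moreover have "\<And>j. j \<in> {1..<i} \<Longrightarrow> \<pi> j = \<sigma> j + 1" using im by (auto simp: \<pi>_def)
            moreover have "\<pi> i = \<sigma> i + 1" using im by (auto simp: \<pi>_def)
            ultimately show ?thesis by auto
          qed
        qed
        have p1: "\<pi> 1 = k" using m s1 assms(2) by (auto simp: \<pi>_def)
        have pn: "\<pi> (Suc m) = 1" by (simp add: \<pi>_def)
        have pin: "\<pi> \<in> Mon_end1 n k" unfolding Mon_end1_def Mon_def using pp pmo p1 pn n by simp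
        have "tilde1 n \<pi> = \<sigma>"
        proof
          fix i show "tilde1 n \<pi> i = \<sigma> i"
            using sf(3)[of i] n by (auto simp: tilde1_def \<pi>_def)
        qed
        thus "\<sigma> \<in> tilde1 n ` Mon_end1 n k" using pin by force
      qed
    qed
  qed
  have B: "\<forall>\<pi>\<in>Mon_end1 n k. (-1::int) ^ dr (n-1) (tilde1 n \<pi>) = (-1) ^ (dr n \<pi> + n)"
  proof
    fix \<pi> assume "\<pi> \<in> Mon_end1 n k"
    hence "dr n \<pi> = n + dr (n-1) (tilde1 n \<pi>)" using part1(2)[of \<pi> m k, OF _ m] n by simp
    hence "dr n \<pi> + n = dr (n-1) (tilde1 n \<pi>) + 2 * n" by simp
    thus "(-1::int) ^ dr (n-1) (tilde1 n \<pi>) = (-1) ^ (dr n \<pi> + n)"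
      by (simp add: power_add power_mult)
  qed
  have C: "bij_betw (tilden n) (Mon_endn n k) (Mon (n-1) k)"
    unfolding bij_betw_def
  proof (intro conjI)
    show "inj_on (tilden n) (Mon_endn n k)"
    proof (rule inj_onI)
      fix p q assume p: "p \<in> Mon_endn n k" and q: "q \<in> Mon_endn n k"
        and e: "tilden n p = tilden n q"
      have pp: "p permutes {1..Suc m}" "p (Suc m) = Suc m" using p n by (auto simp: Mon_endn_def Mon_def)
      have qp: "q permutes {1..Suc m}" "q (Suc m) = Suc m" using q n by (auto simp: Mon_endn_def Mon_def)
      show "p = q"
      proof
        fix i
        show "p i = q i"
        proof (cases "i \<in> {1..m}")
          case True
          thus ?thesis using fun_cong[OF e, of i] n by (simp add: tilden_def)
        next
          case False
          show ?thesis
          proof (cases "i = Suc m")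
            case True thus ?thesis using pp qp by simp
          next
            case F2: False
            hence "i \<notin> {1..Suc m}" using False by auto
            thus ?thesis using perm_facts(3)[OF pp(1)] perm_facts(3)[OF qp(1)] by simp
          qed
        qed
      qed
    qed
    show "tilden n ` Mon_endn n k = Mon (n - 1) k"
    proof
      show "tilden n ` Mon_endn n k \<subseteq> Mon (n - 1) k"
      proof (rule image_subsetI)
        fix \<pi> assume "\<pi> \<in> Mon_endn n k"
        thus "tilden n \<pi> \<in> Mon (n - 1) k" using part2(1)[of \<pi> m k, OF _ m] n by simp
      qed
      show "Mon (n - 1) k \<subseteq> tilden n ` Mon_endn n k"
      proof
        fix \<sigma> assume s: "\<sigma> \<in> Mon (n - 1) k"
        have sp: "\<sigma> permutes {1..m}" and smo: "monotone_perm m \<sigma>" and s1: "\<sigma> 1 = k"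
          using s nm by (auto simp: Mon_def)
        note sf = perm_facts[OF sp]
        have pp: "\<sigma> permutes {1..Suc m}"
          by (rule permutes_subset[OF sp]) auto
        have sn: "\<sigma> (Suc m) = Suc m" using sf(3) by auto
        have pmo: "monotone_perm (Suc m) \<sigma>"
          unfolding monotone_perm_def
        proof
          fix i assume i: "i \<in> {1..Suc m}"
          show "(\<forall>j\<in>{1..<i}. \<sigma> j < \<sigma> i) \<or> (\<forall>j\<in>{1..<i}. \<sigma> j > \<sigma> i)"
          proof (cases "i = Suc m")
            case True
            have "\<forall>j\<in>{1..<i}. \<sigma> j < \<sigma> i"
            proof
              fix j assume "j \<in> {1..<i}"
              thus "\<sigma> j < \<sigma> i" using True sn sf(1)[of j] by auto
            qed
            thus ?thesis by blast
          next
            case False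
            hence im: "i \<in> {1..m}" using i by auto
            thus ?thesis using smo by (auto simp: monotone_perm_def)
          qed
        qed
        have pin: "\<sigma> \<in> Mon_endn n k" unfolding Mon_endn_def Mon_def using pp pmo s1 sn n by simp
        have "tilden n \<sigma> = \<sigma>"
        proof
          fix i show "tilden n \<sigma> i = \<sigma> i"
            using sf(3)[of i] n by (auto simp: tilden_def)
        qed
        thus "\<sigma> \<in> tilden n ` Mon_endn n k" using pin by force
      qed
    qed
  qed
  have D: "\<forall>\<pi>\<in>Mon_endn n k. (-1::int) ^ dr (n-1) (tilden n \<pi>) = (-1) ^ dr n \<pi>"
  proof
    fix \<pi> assume "\<pi> \<in> Mon_endn n k"
    thus "(-1::int) ^ dr (n-1) (tilden n \<pi>) = (-1) ^ dr n \<pi>" using part2(2)[of \<pi> m k, OF _ m] n by simp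
  qed
  show ?thesis using A B C D by blast
qed

end
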